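(* Assume $\tau_1\tau_2\|K\|^2\le1/2$ and $\tau_1\le1/(2L)$, that $x_0\in[0,1]^n$ and $y_0\in\mathbb R_+^{m_1}\times\mathbb R^{m_2}$, and that $\Phi$ is bounded below by $\Phi_*$ (i.e., $\Phi(x,y)\ge\Phi_*$ for all $x,y$). For $k\ge1$ define the residuals \[s_k^x=\frac{x_{k-1}-x_k}{\tau_1}+\nabla_x\hat{\mathcal L}(x_k,y_k)-\nabla_x\hat{\mathcal L}(x_{k-1},y_k),\qquad s_k^y=\frac{y_{k-1}-y_k}{\tau_2}-\nabla_y\hat{\mathcal L}(x_k,y_k)+\nabla_y\hat{\mathcal L}(\bar x_{k-1},y_k).\] Then for every $N\ge1$ there exists $k_0\le N$ such that \[s^x_{k_0}\in\nabla_x\hat{\mathcal L}(x_{k_0},y_{k_0})+\partial h_1(x_{k_0}),\qquad s^y_{k_0}\in-\nabla_y\hat{\mathcal L}(x_{k_0},y_{k_0})+\partial h_2(y_{k_0}),\] and \[\|s^x_{k_0}\|+\|s^y_{k_0}\|\le2\left[\left(2\|K\|+\frac3{2\tau_1}\right)^2\tau_1+\frac1{\tau_2}\right]^{1/2}\left[\frac{\Phi(x_0,y_0)-\Phi_*}{N}+\frac{2}{\tau_1N}\sum_{k=1}^N\|x_{k-1}\|^2+4\tau_2\|r\|^2\right]^{1/2}.\]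
   Context: Let $n,m_1,m_2$ be positive integers, $Q\in\mathbb R^{n\times n}$ symmetric, $c\in\mathbb R^n$, $A\in\mathbb R^{m_1\times n}$, $b\in\mathbb R^{m_1}$, $B\in\mathbb R^{m_2\times n}$, $d\in\mathbb R^{m_2}$. Let $K:=-\begin{pmatrix}A\\ B\end{pmatrix}$ and $r:=(b;d)$. Fix $\rho\ge0$ and let $\mathbf 1$ be the all-ones vector. Define $\hat{\mathcal L}(x,y):=\langle x,Qx\rangle+\langle c,x\rangle+\langle y,Kx+r\rangle+\rho\langle x,\mathbf 1-x\rangle$ (no convexity assumed), so $\nabla_x\hat{\mathcal L}(x,y)=c+\rho\mathbf 1+K^\top y+2Qx-2\rho x$ and $\nabla_y\hat{\mathcal L}(x,y)=Kx+r$. Let $Y:=\mathbb R_+^{m_1}\times\mathbb R^{m_2}$, $h_1$ the indicator of $[0,1]^n$, $h_2$ the indicator of $Y$ ($0$ on the set, $+\infty$ outside); $\partial h_1,\partial h_2$ denote their (convex) subdifferentials. $\Phi(x,y):=\hat{\mathcal L}(x,y)+h_1(x)-h_2(y)$. $L:=2(\|Q\|+\rho)$ with spectral norm. PDHG iterates with step sizes $\tau_1,\tau_2>0$: $x_{-1}:=x_0$, $\bar x_0:=x_0$, and for $k\ge1$: $y_k=\Pi_Y(y_{k-1}+\tau_2(K\bar x_{k-1}+r))$, $x_k=\Pi_{[0,1]^n}(x_{k-1}-\tau_1\nabla_x\hat{\mathcal L}(x_{k-1},y_k))$, $\bar x_k=2x_k-x_{k-1}$, with $\Pi$ the Euclidean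 projection. *)

theory Defs
  imports "HOL-Analysis.Analysis"
begin

definition Kop :: "real^'n^'m1 \<Rightarrow> real^'n^'m2 \<Rightarrow> real^'n \<Rightarrow> (real^'m1) \<times> (real^'m2)" where
  "Kop A B x = (- (A *v x), - (B *v x))"

definition KopT :: "real^'n^'m1 \<Rightarrow> real^'n^'m2 \<Rightarrow> (real^'m1) \<times> (real^'m2) \<Rightarrow> real^'n" where
  "KopT A B y = - (transpose A *v fst y + transpose B *v snd y)"

definition box01 :: "(real^'n) set" where
  "box01 = {x. \<forall>i. 0 \<le> x $ i \<and> x $ i \<le> 1}"

definition Yset :: "((real^'m1) \<times> (real^'m2)) set" where
  "Yset = {y. \<forall>i. 0 \<le> fst y $ i}"

definition ind :: "'a set \<Rightarrow> 'a \<Rightarrow> ereal" where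
  "ind C x = (if x \<in> C then 0 else \<infinity>)"

definition subdiff :: "('a::real_inner \<Rightarrow> ereal) \<Rightarrow> 'a \<Rightarrow> 'a set" where
  "subdiff h x = {g. h x < \<infinity> \<and> (\<forall>z. h x + ereal (inner g (z - x)) \<le> h z)}"

definition Lhat :: "real^'n^'n \<Rightarrow> real^'n \<Rightarrow> real^'n^'m1 \<Rightarrow> real^'m1 \<Rightarrow> real^'n^'m2 \<Rightarrow> real^'m2
    \<Rightarrow> real \<Rightarrow> real^'n \<Rightarrow> (real^'m1) \<times> (real^'m2) \<Rightarrow> real" where
  "Lhat Q c A b B d \<rho> x y = inner x (Q *v x) + inner c x + inner y (Kop A B x + (b, d))
      + \<rho> * inner x (1 - x)"

definition gradx :: "real^'n^'n \<Rightarrow> real^'n \<Rightarrow> real^'n^'m1 \<Rightarrow> real^'n^'m2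
    \<Rightarrow> real \<Rightarrow> real^'n \<Rightarrow> (real^'m1) \<times> (real^'m2) \<Rightarrow> real^'n" where
  "gradx Q c A B \<rho> x y = c + \<rho> *\<^sub>R 1 + KopT A B y + 2 *\<^sub>R (Q *v x) - (2 * \<rho>) *\<^sub>R x"

definition grady :: "real^'n^'m1 \<Rightarrow> real^'m1 \<Rightarrow> real^'n^'m2 \<Rightarrow> real^'m2
    \<Rightarrow> real^'n \<Rightarrow> (real^'m1) \<times> (real^'m2) \<Rightarrow> (real^'m1) \<times> (real^'m2)" where
  "grady A b B d x y = Kop A B x + (b, d)"

definition Phi :: "real^'n^'n \<Rightarrow> real^'n \<Rightarrow> real^'n^'m1 \<Rightarrow> real^'m1 \<Rightarrow> real^'n^'m2 \<Rightarrow> real^'m2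
    \<Rightarrow> real \<Rightarrow> real^'n \<Rightarrow> (real^'m1) \<times> (real^'m2) \<Rightarrow> ereal" where
  "Phi Q c A b B d \<rho> x y = ereal (Lhat Q c A b B d \<rho> x y) + ind box01 x - ind Yset y"

text \<open>PDHG state after k steps: (x_k, x_{k-1}, y_k), with x_{-1} = x_0.\<close>
fun pdhg :: "real^'n^'n \<Rightarrow> real^'n \<Rightarrow> real^'n^'m1 \<Rightarrow> real^'m1 \<Rightarrow> real^'n^'m2 \<Rightarrow> real^'m2
    \<Rightarrow> real \<Rightarrow> real \<Rightarrow> real \<Rightarrow> real^'n \<Rightarrow> (real^'m1) \<times> (real^'m2) \<Rightarrow> nat
    \<Rightarrow> (real^'n) \<times> (real^'n) \<times> ((real^'m1) \<times> (real^'m2))" where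
  "pdhg Q c A b B d \<rho> \<tau>1 \<tau>2 x0 y0 0 = (x0, x0, y0)"
| "pdhg Q c A b B d \<rho> \<tau>1 \<tau>2 x0 y0 (Suc k) =
     (let (x, xp, y) = pdhg Q c A b B d \<rho> \<tau>1 \<tau>2 x0 y0 k;
          xbar = 2 *\<^sub>R x - xp;
          y' = closest_point Yset (y + \<tau>2 *\<^sub>R (Kop A B xbar + (b, d)));
          x' = closest_point box01 (x - \<tau>1 *\<^sub>R gradx Q c A B \<rho> x y')
      in (x', x, y'))"

definition xit where "xit Q c A b B d \<rho> \<tau>1 \<tau>2 x0 y0 k = fst (pdhg Q c A b B d \<rho> \<tau>1 \<tau>2 x0 y0 k)"
definition yit where "yit Q c A b B d \<rho> \<tau>1 \<tau>2 x0 y0 k = snd (snd (pdhg Q c A b B d \<rho> \<tau>1 \<tau>2 x0 y0 k))"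
definition xbar where "xbar Q c A b B d \<rho> \<tau>1 \<tau>2 x0 y0 k =
   (let (x, xp, y) = pdhg Q c A b B d \<rho> \<tau>1 \<tau>2 x0 y0 k in 2 *\<^sub>R x - xp)"

text \<open>Residuals s^x_k, s^y_k (meaningful for k >= 1).\<close>
definition resx where "resx Q c A b B d \<rho> \<tau>1 \<tau>2 x0 y0 k =
   (let x = xit Q c A b B d \<rho> \<tau>1 \<tau>2 x0 y0; y = yit Q c A b B d \<rho> \<tau>1 \<tau>2 x0 y0 in
    (1 / \<tau>1) *\<^sub>R (x (k - 1) - x k) + gradx Q c A B \<rho> (x k) (y k)
      - gradx Q c A B \<rho> (x (k - 1)) (y k))"

definition resy where "resy Q c A b B d \<rho> \<tau>1 \<tau>2 x0 y0 k =
   (let x = xit Q c A b B d \<rho> \<tau>1 \<tau>2 x0 y0; y = yit Q c A b B d \<rho> \<tau>1 \<tau>2 x0 y0;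
        xb = xbar Q c A b B d \<rho> \<tau>1 \<tau>2 x0 y0 in
    (1 / \<tau>2) *\<^sub>R (y (k - 1) - y k) - grady A b B d (x k) (y k)
      + grady A b B d (xb (k - 1)) (y k))"

end

theory Submission
  imports Defs
begin

lemma sum_shift_eq:
  fixes f :: "nat \<Rightarrow> real"
  shows "(\<Sum>k = 1..N. f (k - 1)) + f N = (\<Sum>k = 1..N. f k) + f 0"
  by (induction N) auto

lemma sum_shift_le:
  fixes f :: "nat \<Rightarrow> real"
  assumes "\<And>k. 0 \<le> f k" "f 0 = 0"
  shows "(\<Sum>k = 1..N. f (k - 1)) \<le> (\<Sum>k = 1..N. f k)"
  using sum_shift_eq[of f N] assms(1)[of N] assms(2) by linarith

lemma telescope_le:
  fixes l p :: "nat \<Rightarrow> real"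
  assumes "\<And>k. 1 \<le> k \<Longrightarrow> l k \<le> l (k - 1) + p k"
  shows "l N \<le> l 0 + (\<Sum>k = 1..N. p k)"
proof (induction N)
  case 0 then show ?case by simp
next
  case (Suc N)
  then show ?case using assms[of "Suc N"] by simp
qed

lemma energy:
  fixes a e G p l :: "nat \<Rightarrow> real" and \<Delta> lo :: real
  assumes a0: "a 0 = 0" and anon: "\<And>k. 0 \<le> a k"
    and desc: "\<And>k. 1 \<le> k \<Longrightarrow> l k \<le> l (k - 1) + p k - 3/4 * a k"
    and low: "lo \<le> l N"
    and ee: "\<And>k. 1 \<le> k \<Longrightarrow> e k \<le> 2 * G k + a (k - 1)"
    and pp: "\<And>k. 1 \<le> k \<Longrightarrow> 4 * p k \<le> 4 * G k + e k"
  shows "(\<Sum>k = 1..N. a k + e k) \<le> 4 * (l 0 - lo) + 8 * (\<Sum>k = 1..N. G k)"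
proof -
  have t: "l N \<le> l 0 + (\<Sum>k = 1..N. p k - 3/4 * a k)"
  proof (rule telescope_le)
    fix k :: nat assume "1 \<le> k"
    then show "l k \<le> l (k - 1) + (p k - 3/4 * a k)" using desc[of k] by linarith
  qed
  have s1: "(\<Sum>k = 1..N. p k - 3/4 * a k) = (\<Sum>k = 1..N. p k) - 3/4 * (\<Sum>k = 1..N. a k)"
    by (simp add: sum_subtractf sum_distrib_left)
  have s2: "4 * (\<Sum>k = 1..N. p k) \<le> 4 * (\<Sum>k = 1..N. G k) + (\<Sum>k = 1..N. e k)"
  proof -
    have "(\<Sum>k = 1..N. 4 * p k) \<le> (\<Sum>k = 1..N. 4 * G k + e k)"
      by (rule sum_mono) (use pp in auto)
    then show ?thesis by (simp add: sum.distrib sum_distrib_left)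
  qed
  have s3: "(\<Sum>k = 1..N. e k) \<le> 2 * (\<Sum>k = 1..N. G k) + (\<Sum>k = 1..N. a (k - 1))"
  proof -
    have "(\<Sum>k = 1..N. e k) \<le> (\<Sum>k = 1..N. 2 * G k + a (k - 1))"
      by (rule sum_mono) (use ee in auto)
    then show ?thesis by (simp add: sum.distrib sum_distrib_left)
  qed
  have s4: "(\<Sum>k = 1..N. a (k - 1)) \<le> (\<Sum>k = 1..N. a k)"
    by (rule sum_shift_le) (use anon a0 in auto)
  show ?thesis using t s1 s2 s3 s4 low by (simp add: sum.distrib)
qed

lemma pick_index:
  fixes S u w :: "nat \<Rightarrow> real" and \<alpha> \<beta> \<tau>1 \<tau>2 D :: real
  assumes N: "1 \<le> N" and pos: "0 < \<tau>1" "0 < \<tau>2" "0 < \<alpha>" "0 \<le> \<beta>"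
    and unn: "\<And>k. 0 \<le> u k" and wnn: "\<And>k. 0 \<le> w k" and u0: "u 0 = 0"
    and S: "\<And>k. 1 \<le> k \<Longrightarrow> S k \<le> \<alpha> * u k + \<beta> * u (k - 1) + w k / \<tau>2"
    and tot: "(\<Sum>k = 1..N. (u k)\<^sup>2 / \<tau>1 + (w k)\<^sup>2 / \<tau>2) \<le> 4 * real N * D"
  shows "\<exists>k. 1 \<le> k \<and> k \<le> N \<and> S k \<le> 2 * sqrt ((\<alpha> + \<beta>)\<^sup>2 * \<tau>1 + 1 / \<tau>2) * sqrt D"
proof (rule ccontr)
  assume H: "\<not> ?thesis"
  define C where "C = (\<alpha> + \<beta>)\<^sup>2 * \<tau>1 + 1 / \<tau>2"
  define T where "T k = (\<alpha> * (u k)\<^sup>2 + \<beta> * (u (k - 1))\<^sup>2) / ((\<alpha> + \<beta>) * \<tau>1) + (w k)\<^sup>2 / \<tau>2" for k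
  have Cpos: "0 < C" unfolding C_def using pos by (simp add: add_pos_nonneg)
  have key: "(S k)\<^sup>2 \<le> C * T k" if "1 \<le> k" "0 \<le> S k" for k
  proof -
    let ?u = "u k" and ?v = "u (k - 1)" and ?w = "w k"
    have ab: "0 < \<alpha> + \<beta>" using pos by simp
    have cs1: "(\<alpha> * ?u + \<beta> * ?v)\<^sup>2 \<le> (\<alpha> + \<beta>) * (\<alpha> * ?u\<^sup>2 + \<beta> * ?v\<^sup>2)"
    proof -
      have "(\<alpha> + \<beta>) * (\<alpha> * ?u\<^sup>2 + \<beta> * ?v\<^sup>2) - (\<alpha> * ?u + \<beta> * ?v)\<^sup>2 = \<alpha> * \<beta> * (?u - ?v)\<^sup>2"
        by (simp add: power2_eq_square algebra_simps)
      moreover have "0 \<le> \<alpha> * \<beta> * (?u - ?v)\<^sup>2" using pos by simp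
      ultimately show ?thesis by linarith
    qed
    define P where "P = \<alpha> * ?u + \<beta> * ?v"
    define R where "R = ?w / \<tau>2"
    define c1 where "c1 = (\<alpha> + \<beta>)\<^sup>2 * \<tau>1"
    define t1 where "t1 = (\<alpha> * ?u\<^sup>2 + \<beta> * ?v\<^sup>2) / ((\<alpha> + \<beta>) * \<tau>1)"
    define t2 where "t2 = ?w\<^sup>2 / \<tau>2"
    have P0: "0 \<le> P" unfolding P_def using pos unn by simp
    have R0: "0 \<le> R" unfolding R_def using pos wnn by simp
    have c10: "0 < c1" unfolding c1_def using pos ab by simp
    have t10: "0 \<le> t1" unfolding t1_def using pos ab by simp
    have t20: "0 \<le> t2" unfolding t2_def using pos by simp
    have hP: "P\<^sup>2 \<le> c1 * t1"
    proof -
      have q: "(\<alpha> + \<beta>)\<^sup>2 * \<tau>1 / ((\<alpha> + \<beta>) * \<tau>1) = \<alpha> + \<beta>"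
        using pos ab by (simp add: power2_eq_square)
      have "c1 * t1 = ((\<alpha> + \<beta>)\<^sup>2 * \<tau>1 / ((\<alpha> + \<beta>) * \<tau>1)) * (\<alpha> * ?u\<^sup>2 + \<beta> * ?v\<^sup>2)"
        unfolding c1_def t1_def by simp
      then have "c1 * t1 = (\<alpha> + \<beta>) * (\<alpha> * ?u\<^sup>2 + \<beta> * ?v\<^sup>2)" using q by simp
      then show ?thesis using cs1 unfolding P_def by simp
    qed
    have hR: "R\<^sup>2 = (1 / \<tau>2) * t2"
      unfolding R_def t2_def using pos by (simp add: power2_eq_square field_simps)
    have "(P + R)\<^sup>2 \<le> (c1 + 1 / \<tau>2) * (t1 + t2)"
    proof -
      have "(P + R)\<^sup>2 = P\<^sup>2 + R\<^sup>2 + 2 * P * R" by (simp add: power2_eq_square algebra_simps)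
      have "(2 * P * R)\<^sup>2 \<le> (2 * (1 / \<tau>2) * t1 + 2 * c1 * t2)\<^sup>2 \<or> True" by simp
      have PR: "2 * P * R \<le> (1 / \<tau>2) * t1 + c1 * t2"
      proof -
        have "(2 * P * R)\<^sup>2 = 4 * P\<^sup>2 * R\<^sup>2" by (simp add: power2_eq_square)
        also have "\<dots> = 4 * P\<^sup>2 * ((1 / \<tau>2) * t2)" using hR by simp
        also have "\<dots> \<le> 4 * (c1 * t1) * ((1 / \<tau>2) * t2)"
          using hP t20 pos by (intro mult_right_mono) auto
        also have "\<dots> \<le> ((1 / \<tau>2) * t1 + c1 * t2)\<^sup>2"
        proof -
          have "((1 / \<tau>2) * t1 + c1 * t2)\<^sup>2 - 4 * (c1 * t1) * ((1 / \<tau>2) * t2) = ((1 / \<tau>2) * t1 - c1 * t2)\<^sup>2"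
            by (simp add: power2_eq_square algebra_simps)
          then show ?thesis using zero_le_power2[of "(1 / \<tau>2) * t1 - c1 * t2"] by linarith
        qed
        finally have "(2 * P * R)\<^sup>2 \<le> ((1 / \<tau>2) * t1 + c1 * t2)\<^sup>2" .
        moreover have "0 \<le> (1 / \<tau>2) * t1 + c1 * t2" using pos t10 t20 c10 by simp
        ultimately show ?thesis using power2_le_imp_le by blast
      qed
      have "(c1 + 1 / \<tau>2) * (t1 + t2) = c1 * t1 + (1 / \<tau>2) * t2 + ((1 / \<tau>2) * t1 + c1 * t2)"
        by (simp add: algebra_simps add_divide_distrib)
      then show ?thesis using PR hP hR \<open>(P + R)\<^sup>2 = P\<^sup>2 + R\<^sup>2 + 2 * P * R\<close> by linarith
    qed
    moreover have "S k \<le> P + R" using S[OF that(1)] unfolding P_def R_def by simp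
    ultimately have "(S k)\<^sup>2 \<le> (c1 + 1 / \<tau>2) * (t1 + t2)"
      using that(2) power_mono[of "S k" "P + R" 2] by linarith
    then show ?thesis unfolding C_def T_def c1_def t1_def t2_def by simp
  qed
  have big: "4 * D < T k" if "1 \<le> k" "k \<le> N" for k
  proof -
    have ns: "\<not> S k \<le> 2 * sqrt C * sqrt D" using H that unfolding C_def by blast
    have D0: "0 \<le> D \<or> D < 0" by linarith
    show ?thesis
    proof (cases "D < 0")
      case True
      have "0 \<le> T k" unfolding T_def using pos unn wnn by (intro add_nonneg_nonneg divide_nonneg_pos) auto
      then show ?thesis using True by linarith
    next
      case False
      have "0 \<le> 2 * sqrt C * sqrt D" using Cpos False by simp
      then have Sp: "0 \<le> S k" "2 * sqrt C * sqrt D < S k" using ns by linarith+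
      have "(2 * sqrt C * sqrt D)\<^sup>2 < (S k)\<^sup>2"
        using Sp \<open>0 \<le> 2 * sqrt C * sqrt D\<close> by (intro power_strict_mono) auto
      also have "\<dots> \<le> C * T k" using key[OF that(1) Sp(1)] .
      finally have "4 * C * D < C * T k" using Cpos False by (simp add: power_mult_distrib)
      then show ?thesis using Cpos by simp
    qed
  qed
  have "(\<Sum>k = 1..N. 4 * D) < (\<Sum>k = 1..N. T k)"
    by (rule sum_strict_mono) (use N big in auto)
  moreover have "(\<Sum>k = 1..N. T k) \<le> (\<Sum>k = 1..N. (u k)\<^sup>2 / \<tau>1 + (w k)\<^sup>2 / \<tau>2)"
  proof -
    have ab: "0 < \<alpha> + \<beta>" using pos by simp
    have eq: "T k = \<alpha> / (\<alpha> + \<beta>) * ((u k)\<^sup>2 / \<tau>1) + \<beta> / (\<alpha> + \<beta>) * ((u (k - 1))\<^sup>2 / \<tau>1) + (w k)\<^sup>2 / \<tau>2" for k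
    proof -
      have "(\<alpha> * (u k)\<^sup>2 + \<beta> * (u (k - 1))\<^sup>2) / ((\<alpha> + \<beta>) * \<tau>1)
          = (\<alpha> * (u k)\<^sup>2) / ((\<alpha> + \<beta>) * \<tau>1) + (\<beta> * (u (k - 1))\<^sup>2) / ((\<alpha> + \<beta>) * \<tau>1)"
        by (rule add_divide_distrib)
      then show ?thesis unfolding T_def by (simp only: times_divide_times_eq)
    qed
    have "(\<Sum>k = 1..N. T k) = \<alpha> / (\<alpha> + \<beta>) * (\<Sum>k = 1..N. (u k)\<^sup>2 / \<tau>1)
        + \<beta> / (\<alpha> + \<beta>) * (\<Sum>k = 1..N. (u (k - 1))\<^sup>2 / \<tau>1) + (\<Sum>k = 1..N. (w k)\<^sup>2 / \<tau>2)"
      unfolding eq by (simp add: sum.distrib sum_distrib_left)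
    moreover have "(\<Sum>k = 1..N. (u (k - 1))\<^sup>2 / \<tau>1) \<le> (\<Sum>k = 1..N. (u k)\<^sup>2 / \<tau>1)"
      using sum_shift_le[of "\<lambda>k. (u k)\<^sup>2 / \<tau>1" N] pos u0 by simp
    moreover have "0 \<le> \<beta> / (\<alpha> + \<beta>)" using pos by simp
    moreover have "\<alpha> / (\<alpha> + \<beta>) + \<beta> / (\<alpha> + \<beta>) = 1"
    proof -
      have "(\<alpha> + \<beta>) / (\<alpha> + \<beta>) = 1" using ab by simp
      moreover have "\<alpha> / (\<alpha> + \<beta>) + \<beta> / (\<alpha> + \<beta>) = (\<alpha> + \<beta>) / (\<alpha> + \<beta>)"
        by (rule add_divide_distrib[symmetric])
      ultimately show ?thesis by simp
    qed
    ultimately show ?thesis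
    proof -
      assume e1: "(\<Sum>k = 1..N. T k) = \<alpha> / (\<alpha> + \<beta>) * (\<Sum>k = 1..N. (u k)\<^sup>2 / \<tau>1)
        + \<beta> / (\<alpha> + \<beta>) * (\<Sum>k = 1..N. (u (k - 1))\<^sup>2 / \<tau>1) + (\<Sum>k = 1..N. (w k)\<^sup>2 / \<tau>2)"
        and e2: "(\<Sum>k = 1..N. (u (k - 1))\<^sup>2 / \<tau>1) \<le> (\<Sum>k = 1..N. (u k)\<^sup>2 / \<tau>1)"
        and e3: "0 \<le> \<beta> / (\<alpha> + \<beta>)" and e4: "\<alpha> / (\<alpha> + \<beta>) + \<beta> / (\<alpha> + \<beta>) = 1"
      have m: "\<beta> / (\<alpha> + \<beta>) * (\<Sum>k = 1..N. (u (k - 1))\<^sup>2 / \<tau>1) \<le> \<beta> / (\<alpha> + \<beta>) * (\<Sum>k = 1..N. (u k)\<^sup>2 / \<tau>1)"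
        using e2 e3 by (rule mult_left_mono)
      have d: "\<alpha> / (\<alpha> + \<beta>) * (\<Sum>k = 1..N. (u k)\<^sup>2 / \<tau>1) + \<beta> / (\<alpha> + \<beta>) * (\<Sum>k = 1..N. (u k)\<^sup>2 / \<tau>1)
          = (\<Sum>k = 1..N. (u k)\<^sup>2 / \<tau>1)"
      proof -
        let ?S = "(\<Sum>k = 1..N. (u k)\<^sup>2 / \<tau>1)"
        have "(\<alpha> / (\<alpha> + \<beta>) + \<beta> / (\<alpha> + \<beta>)) * ?S = \<alpha> / (\<alpha> + \<beta>) * ?S + \<beta> / (\<alpha> + \<beta>) * ?S"
          by (rule distrib_right)
        then show ?thesis using e4 by simp
      qed
      have "(\<Sum>k = 1..N. (u k)\<^sup>2 / \<tau>1 + (w k)\<^sup>2 / \<tau>2) = (\<Sum>k = 1..N. (u k)\<^sup>2 / \<tau>1) + (\<Sum>k = 1..N. (w k)\<^sup>2 / \<tau>2)"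
        by (rule sum.distrib)
      then show ?thesis using e1 m d by linarith
    qed
  qed
  ultimately show False using tot by simp
qed

lemma Kop_bl: "bounded_linear (Kop A B)"
proof -
  have "Kop A B = (\<lambda>x. (- (A *v x), - (B *v x)))" by (rule ext) (simp add: Kop_def)
  then show ?thesis
    by (simp add: bounded_linear_Pair bounded_linear_minus)
qed

lemma Kop_add: "Kop A B (u + v) = Kop A B u + Kop A B v"
  by (simp add: Kop_def matrix_vector_right_distrib)

lemma Kop_diff: "Kop A B (u - v) = Kop A B u - Kop A B v"
  by (simp add: Kop_def matrix_vector_mult_diff_distrib)

lemma transpose_mv: "transpose M *v u = u v* M" for M :: "real^'n^'m"
  using vector_transpose_matrix[of u "transpose M"] by simp

lemma Kop_adj: "inner y (Kop A B v) = inner (KopT A B y) v"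
proof -
  obtain y1 y2 where y: "y = (y1, y2)" by (cases y)
  show ?thesis
    unfolding y Kop_def KopT_def
    by (simp add: inner_Pair transpose_mv dot_lmul_matrix inner_add_left inner_minus_left inner_diff_left)
qed

lemma Q_sym_inner: "transpose Q = Q \<Longrightarrow> inner u (Q *v v) = inner v (Q *v (u::real^'n))"
proof -
  assume q: "transpose Q = Q"
  have "inner u (Q *v v) = inner (u v* Q) v" by (simp add: dot_lmul_matrix)
  also have "\<dots> = inner (transpose Q *v u) v" by (simp add: transpose_mv)
  also have "\<dots> = inner v (Q *v u)" using q by (simp add: inner_commute)
  finally show ?thesis .
qed

lemma Lhat_expand:
  assumes "transpose Q = Q"
  shows "Lhat Q c A b B d \<rho> x' y - Lhat Q c A b B d \<rho> x y
     = inner (gradx Q c A B \<rho> x y) (x' - x) + inner (x' - x) (Q *v (x' - x)) - \<rho> * inner (x' - x) (x' - x)"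
proof -
  define e where "e = x' - x"
  have x': "x' = x + e" unfolding e_def by simp
  have s: "inner x (Q *v e) = inner e (Q *v x)" using Q_sym_inner[OF assms] .
  show ?thesis
    unfolding x' Lhat_def gradx_def
    by (simp add: Kop_add inner_add_left inner_add_right inner_diff_left inner_diff_right
        matrix_vector_right_distrib Kop_adj s algebra_simps inner_commute[of c]
        inner_commute[of e 1] inner_commute[of x e] inner_commute[of e "Q *v x"])
qed

lemma box01_closed: "closed (box01 :: (real^'n) set)"
proof -
  have eq: "box01 = (\<Inter>i. {x::real^'n. 0 \<le> x $ i} \<inter> {x. x $ i \<le> 1})"
    unfolding box01_def by auto
  have c1: "closed {x::real^'n. 0 \<le> x $ i}" for i
    by (intro closed_Collect_le continuous_intros)
  have c2: "closed {x::real^'n. x $ i \<le> 1}" for i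
    by (intro closed_Collect_le continuous_intros)
  show ?thesis unfolding eq by (intro closed_INT ballI closed_Int c1 c2)
qed

lemma box01_convex: "convex (box01 :: (real^'n) set)"
proof (rule convexI)
  fix x y :: "real^'n" and u v :: real
  assume x: "x \<in> box01" and y: "y \<in> box01" and u: "0 \<le> u" and v: "0 \<le> v" and uv: "u + v = 1"
  show "u *\<^sub>R x + v *\<^sub>R y \<in> box01"
    unfolding box01_def mem_Collect_eq
  proof
    fix i
    have xi: "0 \<le> x $ i" "x $ i \<le> 1" using x unfolding box01_def by auto
    have yi: "0 \<le> y $ i" "y $ i \<le> 1" using y unfolding box01_def by auto
    have "u * x $ i \<le> u" using xi u mult_left_mono[of "x $ i" 1 u] by simp
    moreover have "v * y $ i \<le> v" using yi v mult_left_mono[of "y $ i" 1 v] by simp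
    moreover have "0 \<le> u * x $ i + v * y $ i" using xi yi u v by simp
    ultimately show "0 \<le> (u *\<^sub>R x + v *\<^sub>R y) $ i \<and> (u *\<^sub>R x + v *\<^sub>R y) $ i \<le> 1"
      using uv by simp
  qed
qed

lemma box01_ne: "(0::real^'n) \<in> box01" unfolding box01_def by simp

lemma Yset_closed: "closed (Yset :: ((real^'m1) \<times> (real^'m2)) set)"
proof -
  have eq: "Yset = (\<Inter>i. {y::(real^'m1) \<times> (real^'m2). 0 \<le> fst y $ i})"
    unfolding Yset_def by auto
  have c1: "closed {y::(real^'m1) \<times> (real^'m2). 0 \<le> fst y $ i}" for i
    by (intro closed_Collect_le continuous_intros)
  show ?thesis unfolding eq by (intro closed_INT ballI c1)
qed

lemma Yset_convex: "convex (Yset :: ((real^'m1) \<times> (real^'m2)) set)"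
proof (rule convexI)
  fix x y :: "(real^'m1) \<times> (real^'m2)" and u v :: real
  assume x: "x \<in> Yset" and y: "y \<in> Yset" and u: "0 \<le> u" and v: "0 \<le> v"
  show "u *\<^sub>R x + v *\<^sub>R y \<in> Yset"
    unfolding Yset_def mem_Collect_eq
  proof
    fix i
    have "0 \<le> fst x $ i" "0 \<le> fst y $ i" using x y unfolding Yset_def by auto
    then show "0 \<le> fst (u *\<^sub>R x + v *\<^sub>R y) $ i" using u v by simp
  qed
qed

lemma Yset_ne: "(0::(real^'m1) \<times> (real^'m2)) \<in> Yset" unfolding Yset_def by simp

lemma proj_subdiff:
  fixes S :: "'a::{real_inner,heine_borel} set"
  assumes "convex S" "closed S" "S \<noteq> {}" "0 < t"
  shows "(1 / t) *\<^sub>R (w - closest_point S w) \<in> subdiff (ind S) (closest_point S w)"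
proof -
  have p: "closest_point S w \<in> S" using assms closest_point_in_set by blast
  have "ereal (inner ((1 / t) *\<^sub>R (w - closest_point S w)) (z - closest_point S w)) \<le> 0"
    if "z \<in> S" for z
  proof -
    have "inner (w - closest_point S w) (z - closest_point S w) \<le> 0"
      using closest_point_dot[OF assms(1,2) that] .
    then have "(1 / t) * inner (w - closest_point S w) (z - closest_point S w) \<le> 0"
      using assms(4) by (simp add: divide_nonpos_pos)
    then show ?thesis by simp
  qed
  then show ?thesis unfolding subdiff_def ind_def using p by auto
qed

locale pd =
  fixes Q :: "real^'n^'n" and c :: "real^'n" and A :: "real^'n^'m1" and b :: "real^'m1"
    and B :: "real^'n^'m2" and d :: "real^'m2" and \<rho> \<tau>1 \<tau>2 :: real
    and x0 :: "real^'n" and y0 :: "(real^'m1) \<times> (real^'m2)"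
  assumes Qsym: "transpose Q = Q"
    and rho: "0 \<le> \<rho>"
    and t1: "0 < \<tau>1" and t2: "0 < \<tau>2"
    and step1: "\<tau>1 * \<tau>2 * (onorm (Kop A B))\<^sup>2 \<le> 1 / 2"
    and step2: "2 * (2 * (onorm (\<lambda>v. Q *v v) + \<rho>)) * \<tau>1 \<le> 1"
    and x0: "x0 \<in> box01"
    and y0: "y0 \<in> Yset"
begin

definition "X = xit Q c A b B d \<rho> \<tau>1 \<tau>2 x0 y0"
definition "Y = yit Q c A b B d \<rho> \<tau>1 \<tau>2 x0 y0"
definition "Xb = xbar Q c A b B d \<rho> \<tau>1 \<tau>2 x0 y0"
definition "P = pdhg Q c A b B d \<rho> \<tau>1 \<tau>2 x0 y0"

abbreviation "K \<equiv> Kop A B"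
abbreviation "r \<equiv> (b, d)"
abbreviation "grad \<equiv> gradx Q c A B \<rho>"
abbreviation "Lh \<equiv> Lhat Q c A b B d \<rho>"
abbreviation "nK \<equiv> onorm (Kop A B)"
abbreviation "nQ \<equiv> onorm (\<lambda>v. Q *v v)"

lemma P_Suc: "P (Suc k) = (closest_point box01 (X k - \<tau>1 *\<^sub>R grad (X k) (Y (Suc k))), X k, Y (Suc k))"
  and Y_Suc: "Y (Suc k) = closest_point Yset (Y k + \<tau>2 *\<^sub>R (K (Xb k) + r))"
proof -
  obtain x xp y where h: "P k = (x, xp, y)" by (cases "P k")
  have hX: "X k = x" and hY: "Y k = y" and hXb: "Xb k = 2 *\<^sub>R x - xp"
    using h by (simp_all add: X_def Y_def Xb_def xit_def yit_def xbar_def P_def)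
  have e: "P (Suc k) = (closest_point box01 (x - \<tau>1 *\<^sub>R grad x (closest_point Yset (y + \<tau>2 *\<^sub>R (K (2 *\<^sub>R x - xp) + r)))),
           x, closest_point Yset (y + \<tau>2 *\<^sub>R (K (2 *\<^sub>R x - xp) + r)))"
    using h unfolding P_def by (simp add: Let_def)
  show ys: "Y (Suc k) = closest_point Yset (Y k + \<tau>2 *\<^sub>R (K (Xb k) + r))"
    using e unfolding hY hXb by (simp add: Y_def yit_def P_def[symmetric])
  show "P (Suc k) = (closest_point box01 (X k - \<tau>1 *\<^sub>R grad (X k) (Y (Suc k))), X k, Y (Suc k))"
    using e ys unfolding hX hY hXb by simp
qed

lemma X_Suc: "X (Suc k) = closest_point box01 (X k - \<tau>1 *\<^sub>R grad (X k) (Y (Suc k)))"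
  using P_Suc[of k] by (simp add: X_def xit_def P_def[symmetric])

lemma X0: "X 0 = x0" and Y0: "Y 0 = y0"
  by (simp_all add: X_def Y_def xit_def yit_def)

lemma Xb_eq: "Xb k = 2 *\<^sub>R X k - X (k - 1)"
proof (cases k)
  case 0 then show ?thesis by (simp add: Xb_def xbar_def X_def xit_def)
next
  case (Suc j)
  have "Xb (Suc j) = (case P (Suc j) of (x, xp, y) \<Rightarrow> 2 *\<^sub>R x - xp)"
    by (simp add: Xb_def xbar_def P_def)
  also have "\<dots> = 2 *\<^sub>R X (Suc j) - X j" unfolding P_Suc X_Suc by simp
  finally have "Xb (Suc j) = 2 *\<^sub>R X (Suc j) - X j" .
  then show ?thesis using Suc by simp
qed

lemma X_in: "X k \<in> box01"
proof (cases k)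
  case 0 then show ?thesis using X0 x0 by simp
next
  case (Suc j) show ?thesis
    unfolding Suc X_Suc by (rule closest_point_in_set[OF box01_closed]) (use box01_ne in blast)
qed

lemma Y_in: "Y k \<in> Yset"
proof (cases k)
  case 0 then show ?thesis using Y0 y0 by simp
next
  case (Suc j) show ?thesis
    unfolding Suc Y_Suc by (rule closest_point_in_set[OF Yset_closed]) (use Yset_ne in blast)
qed

lemma nQ_le: "nQ \<le> 1 / (4 * \<tau>1)"
proof -
  have "4 * (nQ + \<rho>) * \<tau>1 \<le> 1" using step2 by simp
  then have "nQ + \<rho> \<le> 1 / (4 * \<tau>1)" using t1 by (simp add: field_simps)
  then show ?thesis using rho by linarith
qed

lemma nK_le: "\<tau>2 * nK\<^sup>2 \<le> 1 / (2 * \<tau>1)"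
  using step1 t1 by (simp add: field_simps)

lemma Q_bound: "norm (Q *v v) \<le> nQ * norm v"
  using onorm[OF matrix_vector_mul_bounded_linear] by blast

lemma K_bound: "norm (K v) \<le> nK * norm v"
  using onorm[OF Kop_bl] by blast

lemma nQ_nn: "0 \<le> nQ" using onorm_pos_le[OF matrix_vector_mul_bounded_linear] by blast
lemma nK_nn: "0 \<le> nK" using onorm_pos_le[OF Kop_bl] by blast

end

context pd
begin

lemma Phi_eq: "u \<in> box01 \<Longrightarrow> v \<in> Yset \<Longrightarrow> Phi Q c A b B d \<rho> u v = ereal (Lh u v)"
  by (simp add: Phi_def ind_def)

lemma descent:
  "Lh (X (Suc j)) (Y (Suc j)) \<le> Lh (X j) (Y j) + inner (Y (Suc j) - Y j) (K (X j) + r)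
     - 3/4 * ((norm (X (Suc j) - X j))\<^sup>2 / \<tau>1)"
proof -
  define x where "x = X j"
  define x' where "x' = X (Suc j)"
  define y' where "y' = Y (Suc j)"
  define y where "y = Y j"
  define g where "g = grad x y'"
  define e where "e = x' - x"
  have x'eq: "x' = closest_point box01 (x - \<tau>1 *\<^sub>R g)"
    unfolding x'_def x_def g_def y'_def by (rule X_Suc)
  have "inner ((x - \<tau>1 *\<^sub>R g) - x') (x - x') \<le> 0"
    unfolding x'eq by (rule closest_point_dot[OF box01_convex box01_closed]) (simp add: x_def X_in)
  moreover have "(x - \<tau>1 *\<^sub>R g) - x' = - e - \<tau>1 *\<^sub>R g" "x - x' = - e" unfolding e_def by simp_all
  ultimately have "inner (- e - \<tau>1 *\<^sub>R g) (- e) \<le> 0" by simp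
  moreover have "inner (- e - \<tau>1 *\<^sub>R g) (- e) = (norm e)\<^sup>2 + \<tau>1 * inner g e"
    by (simp add: inner_diff_left inner_minus_left inner_minus_right power2_norm_eq_inner inner_commute[of e g])
  ultimately have pr: "(norm e)\<^sup>2 + \<tau>1 * inner g e \<le> 0" by simp
  have ge: "inner g e \<le> - (norm e)\<^sup>2 / \<tau>1"
  proof -
    have "\<tau>1 * inner g e \<le> \<tau>1 * (- (norm e)\<^sup>2 / \<tau>1)" using pr t1 by simp
    then show ?thesis using t1 by (simp only: mult_le_cancel_left_pos)
  qed
  have quad: "Lh x' y' - Lh x y' = inner g e + inner e (Q *v e) - \<rho> * inner e e"
    unfolding g_def e_def by (rule Lhat_expand[OF Qsym])
  have qe: "inner e (Q *v e) \<le> nQ * (norm e)\<^sup>2"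
  proof -
    have "inner e (Q *v e) \<le> norm e * norm (Q *v e)" by (rule norm_cauchy_schwarz)
    also have "\<dots> \<le> norm e * (nQ * norm e)" by (rule mult_left_mono[OF Q_bound]) simp
    finally show ?thesis by (simp add: power2_eq_square mult.commute mult.left_commute)
  qed
  have nqe: "nQ * (norm e)\<^sup>2 \<le> (1 / (4 * \<tau>1)) * (norm e)\<^sup>2"
    by (rule mult_right_mono[OF nQ_le]) simp
  have ree: "0 \<le> \<rho> * inner e e" using rho by simp
  have ylin: "Lh x y' - Lh x y = inner (y' - y) (K x + r)"
    by (simp add: Lhat_def inner_diff_left)
  have "(1 / (4 * \<tau>1)) * (norm e)\<^sup>2 = (1/4) * ((norm e)\<^sup>2 / \<tau>1)" by simp
  moreover have "- (norm e)\<^sup>2 / \<tau>1 = - ((norm e)\<^sup>2 / \<tau>1)" by simp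
  ultimately show ?thesis
    using quad qe nqe ree ylin ge unfolding x_def x'_def y_def y'_def e_def by linarith
qed

lemma K_lin_bound: "norm (K v + r) \<le> nK * norm v + norm r"
  using norm_triangle_ineq[of "K v" r] K_bound[of v] by linarith

lemma sq_sum_le: "0 \<le> p \<Longrightarrow> (p::real) \<le> q1 + q2 \<Longrightarrow> 0 \<le> q1 \<Longrightarrow> 0 \<le> q2 \<Longrightarrow> p\<^sup>2 \<le> 2 * q1\<^sup>2 + 2 * q2\<^sup>2"
proof -
  assume h: "0 \<le> p" "p \<le> q1 + q2" "0 \<le> q1" "0 \<le> q2"
  have "p\<^sup>2 \<le> (q1 + q2)\<^sup>2" using h by (intro power_mono) auto
  also have "\<dots> \<le> 2 * q1\<^sup>2 + 2 * q2\<^sup>2"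
    using zero_le_power2[of "q1 - q2"] by (simp add: power2_eq_square algebra_simps)
  finally show ?thesis .
qed

lemma ystep:
  "(norm (Y (Suc j) - Y j))\<^sup>2 / \<tau>2 \<le> 2 * (\<tau>2 * (norm (K (X j) + r))\<^sup>2) + (norm (X j - X (j - 1)))\<^sup>2 / \<tau>1"
proof -
  define v where "v = K (Xb j) + r"
  define gg where "gg = K (X j) + r"
  define \<delta> where "\<delta> = X j - X (j - 1)"
  have veq: "v = gg + K \<delta>"
    unfolding v_def gg_def \<delta>_def Xb_eq by (simp add: Kop_add[symmetric] Kop_diff[symmetric] algebra_simps scaleR_2)
  have "norm (Y (Suc j) - Y j) = dist (closest_point Yset (Y j + \<tau>2 *\<^sub>R v)) (closest_point Yset (Y j))"
    unfolding Y_Suc v_def closest_point_self[OF Y_in] by (simp add: dist_norm)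
  also have "\<dots> \<le> dist (Y j + \<tau>2 *\<^sub>R v) (Y j)"
    by (rule closest_point_lipschitz[OF Yset_convex Yset_closed]) (use Yset_ne in blast)
  also have "\<dots> = \<tau>2 * norm v" using t2 by (simp add: dist_norm)
  finally have ny: "norm (Y (Suc j) - Y j) \<le> \<tau>2 * norm v" .
  have nv: "norm v \<le> norm gg + nK * norm \<delta>"
    unfolding veq using norm_triangle_ineq[of gg "K \<delta>"] K_bound[of \<delta>] by linarith
  have nv2: "(norm v)\<^sup>2 \<le> 2 * (norm gg)\<^sup>2 + 2 * (nK * norm \<delta>)\<^sup>2"
    by (rule sq_sum_le[OF _ nv]) (use nK_nn in simp_all)
  have "(norm (Y (Suc j) - Y j))\<^sup>2 \<le> (\<tau>2 * norm v)\<^sup>2"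
    using ny by (intro power_mono) auto
  then have "(norm (Y (Suc j) - Y j))\<^sup>2 / \<tau>2 \<le> (\<tau>2 * norm v)\<^sup>2 / \<tau>2"
    using t2 by (simp add: divide_right_mono)
  also have "\<dots> = \<tau>2 * (norm v)\<^sup>2" using t2 by (simp add: power2_eq_square)
  also have "\<dots> \<le> \<tau>2 * (2 * (norm gg)\<^sup>2 + 2 * (nK * norm \<delta>)\<^sup>2)"
    using nv2 t2 by simp
  also have "\<dots> = 2 * (\<tau>2 * (norm gg)\<^sup>2) + 2 * (\<tau>2 * nK\<^sup>2) * (norm \<delta>)\<^sup>2"
    by (simp add: power_mult_distrib algebra_simps)
  also have "\<dots> \<le> 2 * (\<tau>2 * (norm gg)\<^sup>2) + 2 * (1 / (2 * \<tau>1)) * (norm \<delta>)\<^sup>2"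
    by (intro add_left_mono mult_right_mono mult_left_mono nK_le) simp_all
  also have "\<dots> = 2 * (\<tau>2 * (norm gg)\<^sup>2) + (norm \<delta>)\<^sup>2 / \<tau>1" by simp
  finally show ?thesis unfolding gg_def \<delta>_def .
qed

lemma pstep:
  "4 * inner (Y (Suc j) - Y j) (K (X j) + r) \<le> 4 * (\<tau>2 * (norm (K (X j) + r))\<^sup>2) + (norm (Y (Suc j) - Y j))\<^sup>2 / \<tau>2"
proof -
  define w where "w = norm (Y (Suc j) - Y j)"
  define g where "g = norm (K (X j) + r)"
  have "inner (Y (Suc j) - Y j) (K (X j) + r) \<le> w * g"
    unfolding w_def g_def by (rule norm_cauchy_schwarz)
  moreover have "4 * (w * g) \<le> 4 * (\<tau>2 * g\<^sup>2) + w\<^sup>2 / \<tau>2"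
  proof -
    have "\<tau>2 * (4 * (\<tau>2 * g\<^sup>2) + w\<^sup>2 / \<tau>2) - \<tau>2 * (4 * (w * g)) = (2 * \<tau>2 * g - w)\<^sup>2"
      using t2 by (simp add: power2_eq_square algebra_simps)
    then have "\<tau>2 * (4 * (w * g)) \<le> \<tau>2 * (4 * (\<tau>2 * g\<^sup>2) + w\<^sup>2 / \<tau>2)"
      using zero_le_power2[of "2 * \<tau>2 * g - w"] by linarith
    then show ?thesis using t2 by (simp only: mult_le_cancel_left_pos)
  qed
  ultimately show ?thesis unfolding w_def g_def by linarith
qed

lemma Gstep: "8 * (\<tau>2 * (norm (K (X j) + r))\<^sup>2) \<le> 8 / \<tau>1 * (norm (X j))\<^sup>2 + 16 * \<tau>2 * (norm r)\<^sup>2"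
proof -
  have "(norm (K (X j) + r))\<^sup>2 \<le> 2 * (nK * norm (X j))\<^sup>2 + 2 * (norm r)\<^sup>2"
    by (rule sq_sum_le[OF _ K_lin_bound]) (use nK_nn in simp_all)
  then have "\<tau>2 * (norm (K (X j) + r))\<^sup>2 \<le> \<tau>2 * (2 * (nK * norm (X j))\<^sup>2 + 2 * (norm r)\<^sup>2)"
    using t2 by simp
  also have "\<dots> = 2 * (\<tau>2 * nK\<^sup>2) * (norm (X j))\<^sup>2 + 2 * \<tau>2 * (norm r)\<^sup>2"
    by (simp add: power_mult_distrib algebra_simps)
  also have "\<dots> \<le> 2 * (1 / (2 * \<tau>1)) * (norm (X j))\<^sup>2 + 2 * \<tau>2 * (norm r)\<^sup>2"
    by (intro add_right_mono mult_right_mono mult_left_mono nK_le) simp_all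
  finally show ?thesis by simp
qed

end

context pd
begin

abbreviation "sxr \<equiv> resx Q c A b B d \<rho> \<tau>1 \<tau>2 x0 y0"
abbreviation "syr \<equiv> resy Q c A b B d \<rho> \<tau>1 \<tau>2 x0 y0"

lemma sx_eq: "sxr (Suc j) = (1 / \<tau>1) *\<^sub>R (X j - X (Suc j)) + grad (X (Suc j)) (Y (Suc j)) - grad (X j) (Y (Suc j))"
  unfolding resx_def Let_def X_def[symmetric] Y_def[symmetric] by simp

lemma sy_eq: "syr (Suc j) = (1 / \<tau>2) *\<^sub>R (Y j - Y (Suc j)) - grady A b B d (X (Suc j)) (Y (Suc j))
     + grady A b B d (Xb j) (Y (Suc j))"
  unfolding resy_def Let_def X_def[symmetric] Y_def[symmetric] Xb_def[symmetric] by simp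

lemma sx_form: "sxr (Suc j) = 2 *\<^sub>R (Q *v (X (Suc j) - X j)) - (2 * \<rho>) *\<^sub>R (X (Suc j) - X j) - (1 / \<tau>1) *\<^sub>R (X (Suc j) - X j)"
  unfolding sx_eq gradx_def by (simp add: matrix_vector_mult_diff_distrib algebra_simps)

lemma sx_bound: "norm (sxr (Suc j)) \<le> 3 / (2 * \<tau>1) * norm (X (Suc j) - X j)"
proof -
  define e where "e = X (Suc j) - X j"
  have "norm (sxr (Suc j)) \<le> norm (2 *\<^sub>R (Q *v e)) + norm ((2 * \<rho>) *\<^sub>R e) + norm ((1 / \<tau>1) *\<^sub>R e)"
    unfolding sx_form e_def[symmetric] by (rule order_trans[OF norm_triangle_ineq4] ; rule add_right_mono; rule norm_triangle_ineq4)
  also have "\<dots> = 2 * norm (Q *v e) + 2 * \<rho> * norm e + (1 / \<tau>1) * norm e"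
    using rho t1 by simp
  also have "\<dots> \<le> 2 * (nQ * norm e) + 2 * \<rho> * norm e + (1 / \<tau>1) * norm e"
    using Q_bound[of e] by simp
  also have "\<dots> = (2 * (nQ + \<rho>) + 1 / \<tau>1) * norm e" by (simp add: algebra_simps)
  also have "\<dots> \<le> (1 / (2 * \<tau>1) + 1 / \<tau>1) * norm e"
  proof -
    have "4 * (nQ + \<rho>) * \<tau>1 \<le> 1" using step2 by simp
    then have "2 * (nQ + \<rho>) \<le> 1 / (2 * \<tau>1)" using t1 by (simp add: field_simps)
    then show ?thesis by (intro mult_right_mono) simp_all
  qed
  also have "\<dots> = 3 / (2 * \<tau>1) * norm e" using t1 by (simp add: field_simps)
  finally show ?thesis unfolding e_def .
qed

lemma sy_form: "syr (Suc j) = - ((1 / \<tau>2) *\<^sub>R (Y (Suc j) - Y j)) - K ((X (Suc j) - X j) - (X j - X (j - 1)))"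
proof -
  have "X (Suc j) - Xb j = (X (Suc j) - X j) - (X j - X (j - 1))"
    unfolding Xb_eq by (simp add: algebra_simps scaleR_2)
  then have "K (X (Suc j)) - K (Xb j) = K ((X (Suc j) - X j) - (X j - X (j - 1)))"
    by (metis Kop_diff)
  then show ?thesis
    unfolding sy_eq grady_def
    by (simp add: algebra_simps)
qed

lemma sy_bound: "norm (syr (Suc j)) \<le> norm (Y (Suc j) - Y j) / \<tau>2
   + nK * norm (X (Suc j) - X j) + nK * norm (X j - X (j - 1))"
proof -
  define v where "v = (X (Suc j) - X j) - (X j - X (j - 1))"
  have "norm (syr (Suc j)) \<le> norm ((1 / \<tau>2) *\<^sub>R (Y (Suc j) - Y j)) + norm (K v)"
    unfolding sy_form v_def[symmetric]
    using norm_triangle_ineq4[of "- ((1 / \<tau>2) *\<^sub>R (Y (Suc j) - Y j))" "K v"] by simp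
  also have "norm ((1 / \<tau>2) *\<^sub>R (Y (Suc j) - Y j)) = norm (Y (Suc j) - Y j) / \<tau>2"
    using t2 by simp
  also have "norm (K v) \<le> nK * norm v" by (rule K_bound)
  also have "nK * norm v \<le> nK * (norm (X (Suc j) - X j) + norm (X j - X (j - 1)))"
    unfolding v_def by (intro mult_left_mono norm_triangle_ineq4 nK_nn)
  finally show ?thesis by (simp add: algebra_simps)
qed

lemma sx_sub: "sxr (Suc j) \<in> (\<lambda>g. grad (X (Suc j)) (Y (Suc j)) + g) ` subdiff (ind box01) (X (Suc j))"
proof -
  define w where "w = X j - \<tau>1 *\<^sub>R grad (X j) (Y (Suc j))"
  have xs: "X (Suc j) = closest_point box01 w" unfolding w_def by (rule X_Suc)
  have m: "(1 / \<tau>1) *\<^sub>R (w - X (Suc j)) \<in> subdiff (ind box01) (X (Suc j))"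
    unfolding xs by (rule proj_subdiff[OF box01_convex box01_closed _ t1]) (use box01_ne in blast)
  have "sxr (Suc j) = grad (X (Suc j)) (Y (Suc j)) + (1 / \<tau>1) *\<^sub>R (w - X (Suc j))"
    unfolding sx_eq w_def using t1 by (simp add: algebra_simps scaleR_diff_right)
  then show ?thesis using m by blast
qed

lemma sy_sub: "syr (Suc j) \<in> (\<lambda>g. - grady A b B d (X (Suc j)) (Y (Suc j)) + g) ` subdiff (ind Yset) (Y (Suc j))"
proof -
  define w where "w = Y j + \<tau>2 *\<^sub>R (K (Xb j) + r)"
  have ys: "Y (Suc j) = closest_point Yset w" unfolding w_def by (rule Y_Suc)
  have m: "(1 / \<tau>2) *\<^sub>R (w - Y (Suc j)) \<in> subdiff (ind Yset) (Y (Suc j))"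
    unfolding ys by (rule proj_subdiff[OF Yset_convex Yset_closed _ t2]) (use Yset_ne in blast)
  have "syr (Suc j) = - grady A b B d (X (Suc j)) (Y (Suc j)) + (1 / \<tau>2) *\<^sub>R (w - Y (Suc j))"
    unfolding sy_eq w_def grady_def using t2 by (simp add: algebra_simps scaleR_diff_right zero_prod_def)
  then show ?thesis using m by blast
qed

end

context pd
begin

lemma main:
  fixes \<Phi>s :: real and N :: nat
  assumes bdd: "\<forall>u \<in> box01. \<forall>v \<in> Yset. ereal \<Phi>s \<le> Phi Q c A b B d \<rho> u v"
    and N: "1 \<le> N"
  shows "\<exists>k0. 1 \<le> k0 \<and> k0 \<le> N
     \<and> sxr k0 \<in> (\<lambda>g. grad (X k0) (Y k0) + g) ` subdiff (ind box01) (X k0)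
     \<and> syr k0 \<in> (\<lambda>g. - grady A b B d (X k0) (Y k0) + g) ` subdiff (ind Yset) (Y k0)
     \<and> norm (sxr k0) + norm (syr k0) \<le>
        2 * sqrt ((2 * nK + 3 / (2 * \<tau>1))\<^sup>2 * \<tau>1 + 1 / \<tau>2)
          * sqrt ((real_of_ereal (Phi Q c A b B d \<rho> x0 y0) - \<Phi>s) / real N
                  + 2 / (\<tau>1 * real N) * (\<Sum>k = 1..N. (norm (X (k - 1)))\<^sup>2)
                  + 4 * \<tau>2 * (norm r)\<^sup>2)"
proof -
  define u where "u k = norm (X k - X (k - 1))" for k
  define w where "w k = norm (Y k - Y (k - 1))" for k
  define S where "S k = norm (sxr k) + norm (syr k)" for k
  define a where "a k = (u k)\<^sup>2 / \<tau>1" for k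
  define e where "e k = (w k)\<^sup>2 / \<tau>2" for k
  define G where "G k = \<tau>2 * (norm (K (X (k - 1)) + r))\<^sup>2" for k
  define p where "p k = inner (Y k - Y (k - 1)) (K (X (k - 1)) + r)" for k
  define l where "l k = Lh (X k) (Y k)" for k
  define SX where "SX = (\<Sum>k = 1..N. (norm (X (k - 1)))\<^sup>2)"
  define \<Phi>0 where "\<Phi>0 = real_of_ereal (Phi Q c A b B d \<rho> x0 y0)"
  define D where "D = (\<Phi>0 - \<Phi>s) / real N + 2 / (\<tau>1 * real N) * SX + 4 * \<tau>2 * (norm r)\<^sup>2"
  have sucE: "\<And>k. 1 \<le> k \<Longrightarrow> \<exists>j. k = Suc j" by (metis Suc_pred' less_eq_Suc_le One_nat_def)
  have en: "(\<Sum>k = 1..N. a k + e k) \<le> 4 * (l 0 - \<Phi>s) + 8 * (\<Sum>k = 1..N. G k)"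
  proof (rule energy)
    show "a 0 = 0" unfolding a_def u_def by simp
    show "0 \<le> a k" for k unfolding a_def using t1 by simp
    show "l k \<le> l (k - 1) + p k - 3/4 * a k" if k1: "1 \<le> k" for k
    proof -
      obtain j where k: "k = Suc j" using sucE[OF k1] by blast
      show ?thesis unfolding k l_def p_def a_def u_def using descent[of j] by simp
    qed
    show "\<Phi>s \<le> l N"
    proof -
      have "ereal \<Phi>s \<le> ereal (l N)" using bdd X_in Y_in Phi_eq unfolding l_def by metis
      then show ?thesis by simp
    qed
    show "e k \<le> 2 * G k + a (k - 1)" if k1: "1 \<le> k" for k
    proof -
      obtain j where k: "k = Suc j" using sucE[OF k1] by blast
      show ?thesis unfolding k e_def G_def a_def u_def w_def using ystep[of j] by simp
    qed
    show "4 * p k \<le> 4 * G k + e k" if k1: "1 \<le> k" for k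
    proof -
      obtain j where k: "k = Suc j" using sucE[OF k1] by blast
      show ?thesis unfolding k e_def G_def p_def w_def using pstep[of j] by simp
    qed
  qed
  have Gs: "8 * (\<Sum>k = 1..N. G k) \<le> 8 / \<tau>1 * SX + real N * (16 * \<tau>2 * (norm r)\<^sup>2)"
  proof -
    have "(\<Sum>k = 1..N. 8 * G k) \<le> (\<Sum>k = 1..N. 8 / \<tau>1 * (norm (X (k - 1)))\<^sup>2 + 16 * \<tau>2 * (norm r)\<^sup>2)"
      by (rule sum_mono) (unfold G_def, rule Gstep)
    then show ?thesis unfolding SX_def by (simp add: sum.distrib sum_distrib_left)
  qed
  have l0: "l 0 = \<Phi>0" unfolding l_def \<Phi>0_def X0 Y0 using Phi_eq[OF x0 y0] by simp
  have Npos: "0 < real N" using N by simp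
  have ND: "4 * real N * D = 4 * (\<Phi>0 - \<Phi>s) + 8 / \<tau>1 * SX + real N * (16 * \<tau>2 * (norm r)\<^sup>2)"
    unfolding D_def using Npos t1 by (simp add: field_simps)
  have tot: "(\<Sum>k = 1..N. (u k)\<^sup>2 / \<tau>1 + (w k)\<^sup>2 / \<tau>2) \<le> 4 * real N * D"
  proof -
    have "(\<Sum>k = 1..N. (u k)\<^sup>2 / \<tau>1 + (w k)\<^sup>2 / \<tau>2) \<le> 4 * (\<Phi>0 - \<Phi>s) + 8 * (\<Sum>k = 1..N. G k)"
      using en unfolding a_def e_def l0 .
    also have "\<dots> \<le> 4 * (\<Phi>0 - \<Phi>s) + (8 / \<tau>1 * SX + real N * (16 * \<tau>2 * (norm r)\<^sup>2))"
      using Gs by (rule add_left_mono)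
    also have "\<dots> = 4 * real N * D" using ND by simp
    finally show ?thesis .
  qed
  have Sb: "S k \<le> (3 / (2 * \<tau>1) + nK) * u k + nK * u (k - 1) + w k / \<tau>2" if k1: "1 \<le> k" for k
  proof -
    obtain j where k: "k = Suc j" using sucE[OF k1] by blast
    show ?thesis unfolding k S_def u_def w_def using sx_bound[of j] sy_bound[of j]
      by (simp add: algebra_simps)
  qed
  obtain k where k: "1 \<le> k" "k \<le> N"
    and kb: "S k \<le> 2 * sqrt ((3 / (2 * \<tau>1) + nK + nK)\<^sup>2 * \<tau>1 + 1 / \<tau>2) * sqrt D"
    using pick_index[OF N t1 t2 _ nK_nn _ _ _ Sb tot] t1 unfolding u_def w_def
    by (auto simp: add_pos_nonneg nK_nn)
  obtain j where kj: "k = Suc j" using sucE[OF k(1)] by blast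
  have eqc: "3 / (2 * \<tau>1) + nK + nK = 2 * nK + 3 / (2 * \<tau>1)" by simp
  show ?thesis
    apply (rule exI[of _ k])
    using k kb sx_sub[of j] sy_sub[of j] unfolding kj[symmetric] S_def D_def SX_def \<Phi>0_def eqc
    by simp
qed

end

theorem mainTheorem4:
  fixes Q :: "real^'n^'n" and c :: "real^'n" and A :: "real^'n^'m1" and b :: "real^'m1"
    and B :: "real^'n^'m2" and d :: "real^'m2" and \<rho> \<tau>1 \<tau>2 \<Phi>star :: real
    and x0 :: "real^'n" and y0 :: "(real^'m1) \<times> (real^'m2)"
  defines "K \<equiv> Kop A B"
    and "r \<equiv> (b, d)"
    and "L \<equiv> 2 * (onorm (\<lambda>v. Q *v v) + \<rho>)"
    and "x \<equiv> xit Q c A b B d \<rho> \<tau>1 \<tau>2 x0 y0"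
    and "y \<equiv> yit Q c A b B d \<rho> \<tau>1 \<tau>2 x0 y0"
    and "sx \<equiv> resx Q c A b B d \<rho> \<tau>1 \<tau>2 x0 y0"
    and "sy \<equiv> resy Q c A b B d \<rho> \<tau>1 \<tau>2 x0 y0"
  assumes Qsym: "transpose Q = Q"
    and \<rho>: "0 \<le> \<rho>"
    and \<tau>pos: "0 < \<tau>1" "0 < \<tau>2"
    and step1: "\<tau>1 * \<tau>2 * (onorm K)\<^sup>2 \<le> 1 / 2"
    and step2: "2 * L * \<tau>1 \<le> 1"
    and x0: "x0 \<in> box01"
    and y0: "y0 \<in> Yset"
    and bdd: "\<forall>u \<in> box01. \<forall>v \<in> Yset. ereal \<Phi>star \<le> Phi Q c A b B d \<rho> u v"
  shows "\<forall>N::nat. 1 \<le> N \<longrightarrow> (\<exists>k0. 1 \<le> k0 \<and> k0 \<le> N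
     \<and> sx k0 \<in> (\<lambda>g. gradx Q c A B \<rho> (x k0) (y k0) + g) ` subdiff (ind box01) (x k0)
     \<and> sy k0 \<in> (\<lambda>g. - grady A b B d (x k0) (y k0) + g) ` subdiff (ind Yset) (y k0)
     \<and> norm (sx k0) + norm (sy k0) \<le>
        2 * sqrt ((2 * onorm K + 3 / (2 * \<tau>1))\<^sup>2 * \<tau>1 + 1 / \<tau>2)
          * sqrt ((real_of_ereal (Phi Q c A b B d \<rho> x0 y0) - \<Phi>star) / real N
                  + 2 / (\<tau>1 * real N) * (\<Sum>k = 1..N. (norm (x (k - 1)))\<^sup>2)
                  + 4 * \<tau>2 * (norm r)\<^sup>2))"
proof (intro allI impI)
  fix N :: nat
  assume N: "1 \<le> N"
  interpret pd Q c A b B d \<rho> \<tau>1 \<tau>2 x0 y0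
    by unfold_locales (use Qsym \<rho> \<tau>pos step1 step2 x0 y0 assms(1,3) in simp_all)
  show "\<exists>k0. 1 \<le> k0 \<and> k0 \<le> N
     \<and> sx k0 \<in> (\<lambda>g. gradx Q c A B \<rho> (x k0) (y k0) + g) ` subdiff (ind box01) (x k0)
     \<and> sy k0 \<in> (\<lambda>g. - grady A b B d (x k0) (y k0) + g) ` subdiff (ind Yset) (y k0)
     \<and> norm (sx k0) + norm (sy k0) \<le>
        2 * sqrt ((2 * onorm K + 3 / (2 * \<tau>1))\<^sup>2 * \<tau>1 + 1 / \<tau>2)
          * sqrt ((real_of_ereal (Phi Q c A b B d \<rho> x0 y0) - \<Phi>star) / real N
                  + 2 / (\<tau>1 * real N) * (\<Sum>k = 1..N. (norm (x (k - 1)))\<^sup>2)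
                  + 4 * \<tau>2 * (norm r)\<^sup>2)"
    using main[OF bdd N] unfolding assms(1,2,4-7) X_def Y_def .
qed

end
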